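(* Let $(\alpha_N)_{N\ge0}\subseteq[0,1]$ converge to some $\alpha$, and let $L_N=\log_2(N)/5$ (rounded to an integer). For $q\in[0,1]$ let $Z_0,Z_1,\dots$ be a Galton–Watson-type process with $Z_0\sim$ Bernoulli$(q)$, where each individual of generation $0$ has a Binomial$(3,q)$ number of children and each individual of every later generation has a Binomial$(2,q)$ number of children, independently. Then there is $C'>0$, independent of $q$ and $N$, such that for all $N$, $$\Big|\mathbb E\big(Z_0(1-\alpha_N)^{Z_0+Z_1+\cdots+Z_{L_N-1}}\big)-g_{\alpha_N}(q)\Big|\le C'e^{-\alpha_NL_N},$$ and the same bound holds with $\mathbb E\big(Z_0(1-\alpha_N)^{Z_0+\cdots+Z_{L_N-1}}\mathbf 1_{\{Z_{L_N-1}=0\}}\big)$ in place of the first expectation.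
   Context: For $\alpha\in(0,1)$ let $g_\alpha(x)=\frac{(1-\sqrt{1-4(1-\alpha)x(1-x)})^3}{8(1-\alpha)^2x^2}$ for $x\in(0,1]$ and $g_\alpha(0)=0$; let $g_0(x)=x$ for $x\le1/2$ and $g_0(x)=(1-x)^3/x^2$ for $x>1/2$; for $\alpha=1$ set $g_1\equiv0$. *)

theory Defs
  imports "HOL-Probability.Probability"
begin

definition galpha :: "real \<Rightarrow> real \<Rightarrow> real" where
  "galpha a x =
     (if a = 1 then 0
      else if a = 0 then (if x \<le> 1/2 then x else (1 - x)^3 / x^2)
      else if x = 0 then 0
      else (1 - sqrt (1 - 4 * (1 - a) * x * (1 - x)))^3 / (8 * (1 - a)^2 * x^2))"

fun iid_sum :: "nat \<Rightarrow> nat pmf \<Rightarrow> nat pmf" where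
  "iid_sum 0 p = return_pmf 0"
| "iid_sum (Suc n) p = bind_pmf p (\<lambda>x. map_pmf (\<lambda>y. x + y) (iid_sum n p))"

definition offspring :: "real \<Rightarrow> nat \<Rightarrow> nat pmf" where
  "offspring q k = binomial_pmf (if k = 0 then 3 else 2) q"

text \<open>gw_from q k z n: law of the list [Z_k, ..., Z_(k+n-1)] given Z_k = z.\<close>
fun gw_from :: "real \<Rightarrow> nat \<Rightarrow> nat \<Rightarrow> nat \<Rightarrow> nat list pmf" where
  "gw_from q k z 0 = return_pmf []"
| "gw_from q k z (Suc n) =
     bind_pmf (iid_sum z (offspring q k)) (\<lambda>z'. map_pmf (Cons z) (gw_from q (Suc k) z' n))"

text \<open>gw_path q L: law of the list [Z_0, Z_1, ..., Z_L], with Z_0 ~ Bernoulli(q).\<close>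
definition gw_path :: "real \<Rightarrow> nat \<Rightarrow> nat list pmf" where
  "gw_path q L = bind_pmf (bernoulli_pmf q) (\<lambda>b. gw_from q 0 (of_bool b) (Suc L))"

definition LN :: "nat \<Rightarrow> nat" where
  "LN N = nat (round (log 2 (real N) / 5))"

end

theory Submission
  imports Defs
begin

fun uu :: "real \<Rightarrow> real \<Rightarrow> nat \<Rightarrow> real \<Rightarrow> real" where
  "uu b q 0 x = x"
| "uu b q (Suc n) x = b * (1 - q + q * uu b q n x)^2"

lemma uu_range:
  assumes "0 \<le> q" "q \<le> 1" "0 \<le> b" "b \<le> 1" "0 \<le> x" "x \<le> 1"
  shows "0 \<le> uu b q n x \<and> uu b q n x \<le> 1"
proof (induction n)
  case 0 then show ?case using assms by simp
next
  case (Suc n)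
  let ?u = "uu b q n x"
  have "0 \<le> 1 - q + q * ?u" using Suc assms by (simp add: mult_nonneg_nonneg) 
  moreover have "1 - q + q * ?u \<le> 1" using Suc assms mult_left_le[of ?u q] by linarith
  ultimately have "0 \<le> (1 - q + q * ?u)^2" "(1 - q + q * ?u)^2 \<le> 1"
    by (auto simp: power_le_one)
  then show ?case using assms by (simp add: mult_le_one)
qed

lemma uu_mono:
  assumes "0 \<le> q" "q \<le> 1" "0 \<le> b" "b \<le> 1" "0 \<le> x" "x \<le> y" "y \<le> 1"
  shows "uu b q n x \<le> uu b q n y"
proof (induction n)
  case 0 then show ?case using assms by simp
next
  case (Suc n)
  have r: "0 \<le> uu b q n x" using uu_range[of q b x n] assms by auto
  have "0 \<le> 1 - q + q * uu b q n x" using r assms by (simp add: mult_nonneg_nonneg) 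
  moreover have "1 - q + q * uu b q n x \<le> 1 - q + q * uu b q n y"
    using Suc assms by (simp add: mult_left_mono)
  ultimately have "(1 - q + q * uu b q n x)^2 \<le> (1 - q + q * uu b q n y)^2"
    by (auto intro: power_mono)
  then show ?case using assms by (simp add: mult_left_mono)
qed

lemma uu_le_1:
  assumes "0 \<le> q" "q \<le> 1" "0 \<le> b" "b \<le> 1" "0 \<le> x" "x \<le> 1"
  shows "uu b q n x \<le> uu 1 q n x"
proof (induction n)
  case 0 then show ?case by simp
next
  case (Suc n)
  have r: "0 \<le> uu b q n x" using uu_range[of q b x n] assms by auto
  have "0 \<le> 1 - q + q * uu b q n x" using r assms by (simp add: mult_nonneg_nonneg) 
  moreover have "1 - q + q * uu b q n x \<le> 1 - q + q * uu 1 q n x"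
    using Suc assms by (simp add: mult_left_mono)
  ultimately have "(1 - q + q * uu b q n x)^2 \<le> (1 - q + q * uu 1 q n x)^2"
    by (auto intro: power_mono)
  moreover have "b * (1 - q + q * uu b q n x)^2 \<le> (1 - q + q * uu b q n x)^2"
    using assms by (simp add: mult_left_le_one_le)
  ultimately show ?case by simp
qed

lemma uu_diff:
  assumes "0 \<le> q" "q \<le> 1" "0 \<le> b" "b \<le> 1" "0 \<le> x" "x \<le> y" "y \<le> 1"
  shows "uu b q n y - uu b q n x \<le> b^n * (uu 1 q n y - uu 1 q n x)"
proof (induction n)
  case 0 then show ?case by simp
next
  case (Suc n)
  define A where "A = uu b q n y"
  define B where "B = uu b q n x"
  define P where "P = uu 1 q n y"
  define Q where "Q = uu 1 q n x"
  have AB: "B \<le> A" unfolding A_def B_def using uu_mono assms by auto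
  have B0: "0 \<le> B" unfolding B_def using uu_range[of q b x n] assms by auto
  have AP: "A \<le> P" unfolding A_def P_def using uu_le_1[of q b y n] assms by auto
  have BQ: "B \<le> Q" unfolding B_def Q_def using uu_le_1[of q b x n] assms by auto
  have IH: "A - B \<le> b^n * (P - Q)" using Suc unfolding A_def B_def P_def Q_def .
  define ss where "ss = 1 - q"
  have ss0: "0 \<le> ss" using assms ss_def by simp
  have e1: "(ss + q*A)^2 - (ss + q*B)^2 = q * (A - B) * (2* ss + q*(A+B))"
    by (simp add: power2_eq_square algebra_simps)
  have e2: "(ss + q*P)^2 - (ss + q*Q)^2 = q * (P - Q) * (2* ss + q*(P+Q))"
    by (simp add: power2_eq_square algebra_simps)
  have "(A - B) * (2* ss + q*(A+B)) \<le> (b^n * (P - Q)) * (2* ss + q*(P+Q))"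
    apply (rule mult_mono)
    using IH AB B0 AP BQ ss0 assms by (auto intro!: mult_left_mono add_nonneg_nonneg mult_nonneg_nonneg)
  then have "q * ((A - B) * (2* ss + q*(A+B))) \<le> q * ((b^n * (P - Q)) * (2* ss + q*(P+Q)))"
    using assms by (simp add: mult_left_mono)
  then have "(ss + q*A)^2 - (ss + q*B)^2 \<le> b^n * ((ss + q*P)^2 - (ss + q*Q)^2)"
    unfolding e1 e2 by (simp add: algebra_simps)
  then have "b * ((ss + q*A)^2 - (ss + q*B)^2) \<le> b * (b^n * ((ss + q*P)^2 - (ss + q*Q)^2))"
    using assms by (simp add: mult_left_mono)
  then show ?case unfolding A_def B_def P_def Q_def ss_def by (simp add: algebra_simps)
qed

lemma uu_fix:
  assumes "b * (1 - q + q * h)^2 = h"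
  shows "uu b q n h = h"
  using assms by (induction n) auto

lemma uu_dec:
  assumes "0 \<le> q" "q \<le> 1" "0 \<le> b" "b \<le> 1"
  shows "uu b q (Suc n) 1 \<le> uu b q n 1"
proof (induction n)
  case 0 then show ?case using assms by simp
next
  case (Suc n)
  have r: "0 \<le> uu b q (Suc n) 1" using uu_range[of q b 1 "Suc n"] assms by auto
  have "0 \<le> 1 - q + q * uu b q (Suc n) 1" using r assms by (simp add: mult_nonneg_nonneg) 
  moreover have "1 - q + q * uu b q (Suc n) 1 \<le> 1 - q + q * uu b q n 1"
    using Suc assms by (simp add: mult_left_mono)
  ultimately have "(1 - q + q * uu b q (Suc n) 1)^2 \<le> (1 - q + q * uu b q n 1)^2"
    by (auto intro: power_mono)
  then show ?case using assms by (simp add: mult_left_mono)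
qed

lemma aux_div: "(b::real) \<noteq> 0 \<Longrightarrow> q \<noteq> 0 \<Longrightarrow> 4 * q * b * c / t / (2 * b * q) = 2 * c / t"
  by (simp add: field_simps)

lemma D_nonneg:
  fixes q b :: real
  assumes "0 \<le> q" "q \<le> 1" "0 \<le> b" "b \<le> 1"
  shows "0 \<le> 1 - 4 * q * b * (1 - q)"
proof -
  have qb0: "q * (1 - q) * b \<le> q * (1 - q)" by (rule mult_left_le) (use assms in auto)
  have "q * b * (1 - q) = q * (1 - q) * b" by simp
  then have qb: "q * b * (1 - q) \<le> q * (1 - q)" using qb0 by linarith
  have "(1 - 2*q)^2 \<le> 1 - 4 * q * b * (1 - q)" using qb by (simp add: power2_eq_square algebra_simps)
  then show ?thesis by (smt (verit) zero_le_power2)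
qed

definition sfix :: "real \<Rightarrow> real \<Rightarrow> real" where
  "sfix b q = 2 * (1 - q) / (1 + sqrt (1 - 4 * q * b * (1 - q)))"

lemma sfix_props:
  assumes "0 \<le> q" "q \<le> 1" "0 \<le> b" "b \<le> 1"
  shows "0 \<le> sfix b q" "sfix b q \<le> 1" "q * b * (sfix b q)^2 - sfix b q + (1 - q) = 0"
proof -
  define D where "D = 1 - 4 * q * b * (1 - q)"
  have qb0: "q * (1 - q) * b \<le> q * (1 - q)" by (rule mult_left_le) (use assms in auto)
  have "q * b * (1 - q) = q * (1 - q) * b" by simp
  then have qb: "q * b * (1 - q) \<le> q * (1 - q)" using qb0 by linarith
  have D1: "(1 - 2*q)^2 \<le> D" unfolding D_def using qb by (simp add: power2_eq_square algebra_simps)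
  have D0: "0 \<le> D" using D1 by (smt (verit) zero_le_power2)
  have sq: "\<bar>1 - 2*q\<bar> \<le> sqrt D" using D1 real_sqrt_le_mono[OF D1] by simp
  have t0: "1 \<le> 1 + sqrt D" using D0 by simp
  show "0 \<le> sfix b q" unfolding sfix_def D_def[symmetric] using assms t0 by simp
  have sq': "1 - 2*q \<le> sqrt D" using sq abs_ge_self[of "1-2*q"] by linarith
  have tp: "0 < 1 + sqrt D" using D0 by (smt (verit) real_sqrt_ge_zero)
  show "sfix b q \<le> 1" unfolding sfix_def D_def[symmetric] using assms tp sq' by (simp add: divide_le_eq_1)
  define t where "t = 1 + sqrt D"
  have tt: "t^2 - 2*t = - 4 * q * b * (1 - q)" unfolding t_def using D0
    by (simp add: power2_eq_square algebra_simps D_def)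
  have tpos: "t > 0" using tp t_def by simp
  have "q * b * (2 * (1 - q) / t)^2 - 2 * (1 - q) / t + (1 - q)
        = (1 - q) * (4 * q * b * (1 - q) - 2*t + t^2) / t^2"
    using tpos by (simp add: field_simps power2_eq_square)
  also have "\<dots> = 0" using tt by simp
  finally show "q * b * (sfix b q)^2 - sfix b q + (1 - q) = 0"
    unfolding sfix_def D_def[symmetric] t_def[symmetric] .
qed

lemma galpha_eq:
  assumes "0 \<le> q" "q \<le> 1" "0 \<le> a" "a \<le> 1"
  shows "galpha a q = q * (1 - a) * (sfix (1 - a) q)^3"
proof -
  consider "a = 1" | "a = 0" | "0 < a" "a < 1" using assms by linarith
  then show ?thesis
  proof cases
    case 1 then show ?thesis by (simp add: galpha_def)
  next
    case 2
    have D: "1 - 4 * q * (1 - q) = (1 - 2*q)^2" by (simp add: power2_eq_square algebra_simps)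
    show ?thesis
    proof (cases "q \<le> 1/2")
      case True
      then have "sqrt (1 - 4 * q * 1 * (1 - q)) = 1 - 2*q" using D by simp
      then have "sfix 1 q = 1" unfolding sfix_def using True by simp
      then show ?thesis using 2 True by (simp add: galpha_def)
    next
      case False
      then have "sqrt (1 - 4 * q * 1 * (1 - q)) = 2*q - 1" using D
        by (simp add: real_sqrt_abs abs_if) 
      moreover have qnz: "q \<noteq> 0" using False by auto
      ultimately have sf: "sfix 1 q = (1 - q) / q" unfolding sfix_def using False by (simp add: field_simps)
      have g1: "galpha a q = (1-q)^3/q^2" using 2 False by (simp add: galpha_def)
      have "q * (1 - a) * (sfix (1-a) q)^3 = q * ((1-q)/q)^3" unfolding 2
        by (simp only: diff_zero mult_1_right sf)
      also have "\<dots> = (1-q)^3/q^2" using qnz by (simp add: power_divide power3_eq_cube power2_eq_square)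
      finally have g2: "q * (1 - a) * (sfix (1-a) q)^3 = (1-q)^3/q^2" .
      show ?thesis using g1 g2 by simp
    qed
  next
    case 3
    show ?thesis
    proof (cases "q = 0")
      case True then show ?thesis using 3 by (simp add: galpha_def)
    next
      case False
      define b where "b = 1 - a"
      have b0: "0 < b" "b < 1" using 3 b_def by auto
      define D where "D = 1 - 4 * q * b * (1 - q)"
      have qp: "q > 0" using False assms by simp
      have D0: "0 \<le> D" unfolding D_def using D_nonneg[of q b] assms b0 by simp
      have prod: "(1 - sqrt D) * (1 + sqrt D) = 4 * q * b * (1 - q)"
      proof -
        have "(1 - sqrt D) * (1 + sqrt D) = 1 - (sqrt D)^2" by (simp add: power2_eq_square algebra_simps)
        also have "\<dots> = 1 - D" using D0 by simp
        finally show ?thesis unfolding D_def by simp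
      qed
      have t0: "1 + sqrt D > 0" using D0 by (smt (verit) real_sqrt_ge_zero)
      have e1: "1 - sqrt D = 4 * q * b * (1 - q) / (1 + sqrt D)"
        using prod t0 by (simp add: eq_divide_eq)
      have bq: "b \<noteq> 0" "q \<noteq> 0" using b0 qp by auto
      have s: "sfix b q = (1 - sqrt D) / (2 * b * q)"
        unfolding e1 sfix_def D_def[symmetric] using aux_div[OF bq] by simp
      have Dg: "1 - 4 * (1 - a) * q * (1 - q) = D" unfolding D_def b_def by simp
      have "galpha a q = (1 - sqrt D)^3 / (8 * b^2 * q^2)"
        using 3 qp unfolding galpha_def Dg by (simp add: b_def)
      also have "\<dots> = q * b * ((1 - sqrt D) / (2 * b * q))^3"
        using bq by (simp add: power_divide power_mult_distrib field_simps power3_eq_cube power2_eq_square)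
      finally show ?thesis using s b_def by simp
    qed
  qed
qed

lemma integral_bind_pmf_bdd:
  fixes f :: "'b \<Rightarrow> real"
  assumes bnd: "\<And>y. y \<in> set_pmf (bind_pmf M N) \<Longrightarrow> \<bar>f y\<bar> \<le> B"
  shows "measure_pmf.expectation (bind_pmf M N) f
         = measure_pmf.expectation M (\<lambda>x. measure_pmf.expectation (N x) f)"
proof -
  define g where "g y = (if y \<in> set_pmf (bind_pmf M N) then f y else 0)" for y
  have 1: "measure_pmf.expectation (bind_pmf M N) f = measure_pmf.expectation (bind_pmf M N) g"
    by (intro integral_cong_AE) (auto simp: AE_measure_pmf_iff g_def)
  have gb: "\<bar>g y\<bar> \<le> max B 0" for y
  proof -
    have "y \<in> set_pmf (bind_pmf M N) \<Longrightarrow> \<bar>f y\<bar> \<le> max B 0" using bnd by (meson le_max_iff_disj)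
    then show ?thesis unfolding g_def by (simp del: set_bind_pmf)
  qed
  have 2: "measure_pmf.expectation (bind_pmf M N) g
      = measure_pmf.expectation M (\<lambda>x. measure_pmf.expectation (N x) g)"
    unfolding measure_pmf_bind
    by (rule integral_bind[where K="count_space UNIV" and B="max B 0" and B'=1])
       (auto simp: gb measurable_measure_pmf measure_pmf.finite_measure measure_pmf.emeasure_space_1 space_subprob_algebra subprob_space_measure_pmf)
  have 3: "measure_pmf.expectation M (\<lambda>x. measure_pmf.expectation (N x) g)
      = measure_pmf.expectation M (\<lambda>x. measure_pmf.expectation (N x) f)"
    by (intro integral_cong_AE) (auto simp: AE_measure_pmf_iff g_def intro!: integral_cong_AE)
  show ?thesis using 1 2 3 by simp
qed

lemma iid_sum_1: "iid_sum 1 p = p"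
  by (simp add: map_pmf_def bind_return_pmf bind_return_pmf')

lemma binomial_pgf:
  assumes "0 \<le> q" "q \<le> 1"
  shows "measure_pmf.expectation (binomial_pmf n q) (\<lambda>y. (c::real) ^ y) = (1 - q + q * c) ^ n"
proof -
  have fin: "finite (set_pmf (binomial_pmf n q))" using assms by auto
  have "measure_pmf.expectation (binomial_pmf n q) (\<lambda>y. c ^ y)
      = (\<Sum>k\<in>{..n}. c ^ k * pmf (binomial_pmf n q) k)"
    by (rule integral_measure_pmf_real) (use assms in \<open>auto simp: set_pmf_binomial_eq split: if_splits\<close>)
  also have "\<dots> = (\<Sum>k\<in>{..n}. real (n choose k) * (q * c) ^ k * (1 - q) ^ (n - k))"
    using assms by (intro sum.cong) (auto simp: power_mult_distrib)
  also have "\<dots> = (q * c + (1 - q)) ^ n" by (rule binomial_ring[symmetric])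
  finally show ?thesis by (simp add: algebra_simps)
qed

lemma iid_pgf:
  assumes "0 \<le> c" "c \<le> 1"
  shows "measure_pmf.expectation (iid_sum n p) (\<lambda>y. (c::real) ^ y)
       = (measure_pmf.expectation p (\<lambda>y. c ^ y)) ^ n"
proof (induction n)
  case 0 then show ?case by simp
next
  case (Suc n)
  have bnd: "\<bar>c ^ y\<bar> \<le> 1" for y using assms by (simp add: power_le_one)
  have "measure_pmf.expectation (iid_sum (Suc n) p) (\<lambda>y. c ^ y)
      = measure_pmf.expectation p (\<lambda>x. measure_pmf.expectation (iid_sum n p) (\<lambda>y. c ^ (x + y)))"
    by (simp only: iid_sum.simps, subst integral_bind_pmf_bdd[where B=1]) (auto simp: bnd)
  also have "\<dots> = measure_pmf.expectation p (\<lambda>x. c ^ x * measure_pmf.expectation (iid_sum n p) (\<lambda>y. c ^ y))"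
    by (simp add: power_add)
  also have "\<dots> = measure_pmf.expectation p (\<lambda>y. c ^ y) * (measure_pmf.expectation p (\<lambda>y. c ^ y)) ^ n"
    using Suc by simp
  finally show ?case by simp
qed

lemma gw_supp:
  "zs \<in> set_pmf (gw_from q k z n) \<Longrightarrow> length zs = n \<and> (n > 0 \<longrightarrow> zs ! 0 = z)"
proof (induction n arbitrary: k z zs)
  case 0 then show ?case by simp
next
  case (Suc n)
  then show ?case by (auto simp: set_bind_pmf)
qed

lemma gw_E:
  assumes q: "0 \<le> q" "q \<le> 1" and b: "0 \<le> b" "b \<le> 1" and x: "0 \<le> x" "x \<le> 1"
  shows "1 \<le> k \<Longrightarrow> m < n \<Longrightarrow>
    measure_pmf.expectation (gw_from q k z n) (\<lambda>zs. b ^ sum_list (take m zs) * x ^ (zs ! m))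
      = (uu b q m x) ^ z"
proof (induction m arbitrary: k z n)
  have bnd: "\<bar>b ^ i * x ^ j\<bar> \<le> 1" for i j using b x by (simp add: abs_mult power_le_one mult_le_one)
  have bndx: "\<bar>x ^ j\<bar> \<le> 1" for j using x by (simp add: power_le_one)
  have bnd3: "\<bar>b ^ i * (x ^ j * b ^ l)\<bar> \<le> 1" for i j l using b x by (simp add: abs_mult power_le_one mult_le_one)
  {
    case 0
    then obtain n' where n: "n = Suc n'" by (cases n) auto
    show ?case unfolding n gw_from.simps
      by (subst integral_bind_pmf_bdd[where B=1]) (auto simp: bnd bndx)
  next
    case (Suc m)
    then obtain n' where n: "n = Suc n'" and mn: "m < n'" by (cases n) auto
    have u: "0 \<le> uu b q m x" "uu b q m x \<le> 1" using uu_range[OF q b x] by auto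
    have off: "offspring q k = binomial_pmf 2 q" using Suc by (simp add: offspring_def)
    have "measure_pmf.expectation (gw_from q k z n) (\<lambda>zs. b ^ sum_list (take (Suc m) zs) * x ^ (zs ! Suc m))
       = measure_pmf.expectation (iid_sum z (offspring q k))
           (\<lambda>z'. measure_pmf.expectation (gw_from q (Suc k) z' n')
               (\<lambda>ws. b ^ z * (b ^ sum_list (take m ws) * x ^ (ws ! m))))"
      unfolding n gw_from.simps
      by (subst integral_bind_pmf_bdd[where B=1]) (auto simp: bnd bnd3 power_add mult_ac)
    also have "\<dots> = measure_pmf.expectation (iid_sum z (offspring q k))
           (\<lambda>z'. b ^ z * (uu b q m x) ^ z')"
      using Suc.IH[of "Suc k" n'] mn by simp
    also have "\<dots> = b ^ z * ((1 - q + q * uu b q m x) ^ 2) ^ z"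
      using iid_pgf[OF u, of z "offspring q k"] binomial_pgf[OF q, of 2 "uu b q m x"] off by simp
    also have "\<dots> = (uu b q (Suc m) x) ^ z" by (simp add: power_mult_distrib)
    finally show ?case .
  }
qed

lemma top1:
  fixes f :: "nat list \<Rightarrow> real"
  assumes "0 \<le> q" "q \<le> 1" and bnd: "\<And>ws. \<bar>f (1 # ws)\<bar> \<le> B"
  shows "measure_pmf.expectation (gw_from q 0 1 (Suc L)) f
       = measure_pmf.expectation (binomial_pmf 3 q)
           (\<lambda>z'. measure_pmf.expectation (gw_from q 1 z' L) (\<lambda>ws. f (1 # ws)))"
proof -
  have bnd': "\<And>ws. \<bar>f (Suc 0 # ws)\<bar> \<le> B" using bnd by simp
  show ?thesis
  unfolding gw_from.simps
  by (subst integral_bind_pmf_bdd[where B=B]) (auto simp: bnd' iid_sum_1 offspring_def bind_return_pmf')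
qed

lemma top0:
  fixes f :: "nat list \<Rightarrow> real"
  assumes "\<And>zs. zs ! 0 = 0 \<Longrightarrow> f zs = 0"
  shows "measure_pmf.expectation (gw_from q 0 0 (Suc L)) f = 0"
proof -
  have "measure_pmf.expectation (gw_from q 0 0 (Suc L)) f
      = measure_pmf.expectation (gw_from q 0 0 (Suc L)) (\<lambda>_. 0)"
    by (intro integral_cong_AE) (auto simp: AE_measure_pmf_iff assms dest!: gw_supp)
  then show ?thesis by simp
qed

lemma path_E:
  fixes f :: "nat list \<Rightarrow> real"
  assumes q: "0 \<le> q" "q \<le> 1" and bnd: "\<And>zs. zs ! 0 \<le> 1 \<Longrightarrow> \<bar>f zs\<bar> \<le> B"
  shows "measure_pmf.expectation (gw_path q L) f
     = q * measure_pmf.expectation (gw_from q 0 1 (Suc L)) f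
       + (1 - q) * measure_pmf.expectation (gw_from q 0 0 (Suc L)) f"
proof -
  have "measure_pmf.expectation (gw_path q L) f
     = measure_pmf.expectation (bernoulli_pmf q)
         (\<lambda>bb. measure_pmf.expectation (gw_from q 0 (of_bool bb) (Suc L)) f)"
    unfolding gw_path_def
    by (rule integral_bind_pmf_bdd[where B=B]) (auto simp del: gw_from.simps intro!: bnd dest!: gw_supp)
  then show ?thesis using q by (simp add: mult_ac)
qed

lemma Q1_eq:
  assumes q: "0 \<le> q" "q \<le> 1" and b: "0 \<le> b" "b \<le> 1"
  shows "measure_pmf.expectation (gw_path q (Suc l))
           (\<lambda>zs. real (zs ! 0) * b ^ sum_list (take (Suc l) zs))
       = q * b * (1 - q + q * uu b q l 1) ^ 3"
proof -
  have bb: "\<bar>b ^ i\<bar> \<le> 1" for i using b by (simp add: power_le_one)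
  have bnd: "zs ! 0 \<le> 1 \<Longrightarrow> \<bar>real (zs ! 0) * b ^ sum_list (take (Suc l) zs)\<bar> \<le> 1" for zs
    using bb[of "sum_list (take (Suc l) zs)"] by (simp add: abs_mult mult_le_one)
  have u: "0 \<le> uu b q l 1" "uu b q l 1 \<le> 1" using uu_range[OF q b, of 1 l] by auto
  have bb2: "b * b ^ i \<le> 1" for i using power_le_one[of b "Suc i"] b by simp
  have e1: "measure_pmf.expectation (gw_from q 0 1 (Suc (Suc l)))
           (\<lambda>zs. real (zs ! 0) * b ^ sum_list (take (Suc l) zs))
     = measure_pmf.expectation (binomial_pmf 3 q)
         (\<lambda>z'. measure_pmf.expectation (gw_from q 1 z' (Suc l))
              (\<lambda>ws. b * (b ^ sum_list (take l ws) * 1 ^ (ws ! l))))"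
    by (subst top1[OF q, where B=1]) (auto simp: bb power_add abs_mult mult_le_one b bb2)
  also have "\<dots> = measure_pmf.expectation (binomial_pmf 3 q) (\<lambda>z'. b * (uu b q l 1) ^ z')"
    using gw_E[OF q b, of 1 1 l "Suc l"] by simp
  also have "\<dots> = b * (1 - q + q * uu b q l 1) ^ 3"
    using binomial_pgf[OF q, of 3 "uu b q l 1"] by simp
  finally have e1': "measure_pmf.expectation (gw_from q 0 1 (Suc (Suc l)))
           (\<lambda>zs. real (zs ! 0) * b ^ sum_list (take (Suc l) zs)) = b * (1 - q + q * uu b q l 1) ^ 3" .
  have e0: "measure_pmf.expectation (gw_from q 0 0 (Suc (Suc l)))
           (\<lambda>zs. real (zs ! 0) * b ^ sum_list (take (Suc l) zs)) = 0"
    by (rule top0) simp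
  have P: "measure_pmf.expectation (gw_path q (Suc l)) (\<lambda>zs. real (zs ! 0) * b ^ sum_list (take (Suc l) zs))
     = q * measure_pmf.expectation (gw_from q 0 1 (Suc (Suc l))) (\<lambda>zs. real (zs ! 0) * b ^ sum_list (take (Suc l) zs))
       + (1 - q) * measure_pmf.expectation (gw_from q 0 0 (Suc (Suc l))) (\<lambda>zs. real (zs ! 0) * b ^ sum_list (take (Suc l) zs))"
    by (rule path_E[OF q, where B=1]) (rule bnd)
  show ?thesis unfolding P e1' e0 by simp
qed

lemma Q1_eq0:
  assumes q: "0 \<le> q" "q \<le> 1"
  shows "measure_pmf.expectation (gw_path q 0)
           (\<lambda>zs. real (zs ! 0) * b ^ sum_list (take 0 zs)) = q"
proof -
  have e1: "measure_pmf.expectation (gw_from q 0 1 (Suc 0))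
           (\<lambda>zs. real (zs ! 0) * b ^ sum_list (take 0 zs)) = 1"
    by (subst top1[OF q, where B=1]) auto
  have e0: "measure_pmf.expectation (gw_from q 0 0 (Suc 0))
           (\<lambda>zs. real (zs ! 0) * b ^ sum_list (take 0 zs)) = 0"
    by (rule top0) simp
  have P: "measure_pmf.expectation (gw_path q 0) (\<lambda>zs. real (zs ! 0) * b ^ sum_list (take 0 zs))
     = q * measure_pmf.expectation (gw_from q 0 1 (Suc 0)) (\<lambda>zs. real (zs ! 0) * b ^ sum_list (take 0 zs))
       + (1 - q) * measure_pmf.expectation (gw_from q 0 0 (Suc 0)) (\<lambda>zs. real (zs ! 0) * b ^ sum_list (take 0 zs))"
    by (rule path_E[OF q, where B=1]) simp
  show ?thesis unfolding P e1 e0 by simp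
qed

lemma Q2_eq1:
  assumes q: "0 \<le> q" "q \<le> 1" and b: "0 \<le> b" "b \<le> 1"
  shows "measure_pmf.expectation (gw_path q (Suc 0))
           (\<lambda>zs. real (zs ! 0) * b ^ sum_list (take (Suc 0) zs) * (if zs ! (Suc 0 - 1) = 0 then 1 else 0)) = 0"
proof -
  have e1: "measure_pmf.expectation (gw_from q 0 1 (Suc (Suc 0)))
           (\<lambda>zs. real (zs ! 0) * b ^ sum_list (take (Suc 0) zs) * (if zs ! (Suc 0 - 1) = 0 then 1 else 0)) = 0"
    by (subst top1[OF q, where B=1]) auto
  have e0: "measure_pmf.expectation (gw_from q 0 0 (Suc (Suc 0)))
           (\<lambda>zs. real (zs ! 0) * b ^ sum_list (take (Suc 0) zs) * (if zs ! (Suc 0 - 1) = 0 then 1 else 0)) = 0"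
    by (rule top0) simp
  have bb: "\<bar>b ^ i\<bar> \<le> 1" for i using b by (simp add: power_le_one)
  have bnd: "zs ! 0 \<le> 1 \<Longrightarrow> \<bar>real (zs ! 0) * b ^ sum_list (take (Suc 0) zs) * (if zs ! (Suc 0 - 1) = 0 then 1 else 0)\<bar> \<le> 1" for zs
    using bb[of "sum_list (take (Suc 0) zs)"] by (simp add: abs_mult mult_le_one)
  have P: "measure_pmf.expectation (gw_path q (Suc 0)) (\<lambda>zs. real (zs ! 0) * b ^ sum_list (take (Suc 0) zs) * (if zs ! (Suc 0 - 1) = 0 then 1 else 0))
     = q * measure_pmf.expectation (gw_from q 0 1 (Suc (Suc 0))) (\<lambda>zs. real (zs ! 0) * b ^ sum_list (take (Suc 0) zs) * (if zs ! (Suc 0 - 1) = 0 then 1 else 0))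
       + (1 - q) * measure_pmf.expectation (gw_from q 0 0 (Suc (Suc 0))) (\<lambda>zs. real (zs ! 0) * b ^ sum_list (take (Suc 0) zs) * (if zs ! (Suc 0 - 1) = 0 then 1 else 0))"
    by (rule path_E[OF q, where B=1]) (rule bnd)
  show ?thesis unfolding P e1 e0 by simp
qed

lemma Q2_eq:
  assumes q: "0 \<le> q" "q \<le> 1" and b: "0 \<le> b" "b \<le> 1"
  shows "measure_pmf.expectation (gw_path q (Suc (Suc j)))
           (\<lambda>zs. real (zs ! 0) * b ^ sum_list (take (Suc (Suc j)) zs)
              * (if zs ! (Suc (Suc j) - 1) = 0 then 1 else 0))
       = q * b * (1 - q + q * uu b q j 0) ^ 3"
proof -
  define f where "f zs = real (zs ! 0) * b ^ sum_list (take (Suc (Suc j)) zs)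
              * (if zs ! (Suc (Suc j) - 1) = 0 then 1 else 0)" for zs
  have bb: "\<bar>b ^ i\<bar> \<le> 1" for i using b by (simp add: power_le_one)
  have bnd: "zs ! 0 \<le> 1 \<Longrightarrow> \<bar>f zs\<bar> \<le> 1" for zs
    using bb[of "sum_list (take (Suc (Suc j)) zs)"] by (simp add: f_def abs_mult mult_le_one)
  have u: "0 \<le> uu b q j 0" "uu b q j 0 \<le> 1" using uu_range[OF q b, of 0 j] by auto
  have fw: "f (1 # ws) = b * (b ^ sum_list (take j ws) * 0 ^ (ws ! j))" if "length ws = Suc (Suc j)" for ws
  proof -
    have "take (Suc j) ws = take j ws @ [ws ! j]" using that by (simp add: take_Suc_conv_app_nth)
    then show ?thesis by (simp add: f_def power_add)
  qed
  have fw': "f (Suc 0 # ws) = b * (b ^ sum_list (take j ws) * 0 ^ (ws ! j))" if "length ws = Suc (Suc j)" for ws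
    using fw[OF that] by simp
  have e1: "measure_pmf.expectation (gw_from q 0 1 (Suc (Suc (Suc j)))) f
     = measure_pmf.expectation (binomial_pmf 3 q)
         (\<lambda>z'. measure_pmf.expectation (gw_from q 1 z' (Suc (Suc j)))
              (\<lambda>ws. b * (b ^ sum_list (take j ws) * 0 ^ (ws ! j))))"
  proof -
    have c: "measure_pmf.expectation (gw_from q 1 z' (Suc (Suc j))) (\<lambda>ws. f (1 # ws))
      = measure_pmf.expectation (gw_from q 1 z' (Suc (Suc j))) (\<lambda>ws. b * (b ^ sum_list (take j ws) * 0 ^ (ws ! j)))" for z'
      by (intro integral_cong_AE) (auto simp del: gw_from.simps simp: AE_measure_pmf_iff fw fw' dest!: gw_supp)
    have b1: "\<bar>f (1 # ws)\<bar> \<le> 1" for ws using bnd[of "1 # ws"] by simp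
    show ?thesis by (subst top1[OF q, where B=1]) (auto simp only: b1 c)
  qed
  also have "\<dots> = measure_pmf.expectation (binomial_pmf 3 q) (\<lambda>z'. b * (uu b q j 0) ^ z')"
    using gw_E[OF q b, of 0 1 j "Suc (Suc j)"] by simp
  also have "\<dots> = b * (1 - q + q * uu b q j 0) ^ 3"
    using binomial_pgf[OF q, of 3 "uu b q j 0"] by simp
  finally have e1': "measure_pmf.expectation (gw_from q 0 1 (Suc (Suc (Suc j)))) f
     = b * (1 - q + q * uu b q j 0) ^ 3" .
  have e0: "measure_pmf.expectation (gw_from q 0 0 (Suc (Suc (Suc j)))) f = 0"
    by (rule top0) (simp add: f_def)
  have P: "measure_pmf.expectation (gw_path q (Suc (Suc j))) f
     = q * measure_pmf.expectation (gw_from q 0 1 (Suc (Suc (Suc j)))) f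
       + (1 - q) * measure_pmf.expectation (gw_from q 0 0 (Suc (Suc (Suc j)))) f"
    by (rule path_E[OF q, where B=1]) (rule bnd)
  have "measure_pmf.expectation (gw_path q (Suc (Suc j))) f = q * b * (1 - q + q * uu b q j 0) ^ 3"
    unfolding P e1' e0 by simp
  then show ?thesis unfolding f_def .
qed

lemma cube_bound:
  fixes q b A H d :: real
  assumes "0 \<le> q" "q \<le> 1" "0 \<le> b" "b \<le> 1" "0 \<le> A" "A \<le> 1" "0 \<le> H" "H \<le> 1"
    and "\<bar>A - H\<bar> \<le> d"
  shows "\<bar>q * b * (1 - q + q * A) ^ 3 - q * b * (1 - q + q * H) ^ 3\<bar> \<le> 3 * b * d"
proof -
  define x where "x = 1 - q + q * A"
  define y where "y = 1 - q + q * H"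
  have x: "0 \<le> x" "x \<le> 1" unfolding x_def using assms mult_left_le[of A q]
    by (auto intro: add_nonneg_nonneg mult_nonneg_nonneg)
  have y: "0 \<le> y" "y \<le> 1" unfolding y_def using assms mult_left_le[of H q]
    by (auto intro: add_nonneg_nonneg mult_nonneg_nonneg)
  have xy: "\<bar>x - y\<bar> \<le> d"
  proof -
    have "\<bar>x - y\<bar> = q * \<bar>A - H\<bar>" unfolding x_def y_def using assms
      by (simp add: abs_mult right_diff_distrib[symmetric])
    also have "\<dots> \<le> \<bar>A - H\<bar>" using assms by (simp add: mult_left_le_one_le)
    finally show ?thesis using assms by linarith
  qed
  have s: "x^2 + x*y + y^2 \<le> 3" using x y mult_le_one[of x y] power_le_one[of x 2] power_le_one[of y 2] by linarith
  have s0: "0 \<le> x^2 + x*y + y^2" using x y by simp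
  have "\<bar>x^3 - y^3\<bar> = \<bar>x - y\<bar> * (x^2 + x*y + y^2)"
  proof -
    have "x^3 - y^3 = (x - y) * (x^2 + x*y + y^2)" by (simp add: power2_eq_square power3_eq_cube algebra_simps)
    then show ?thesis using s0 by (simp add: abs_mult)
  qed
  also have "\<dots> \<le> d * 3" using xy s s0 by (intro mult_mono) auto
  finally have c: "\<bar>x^3 - y^3\<bar> \<le> 3 * d" by simp
  have "\<bar>q * b * x ^ 3 - q * b * y ^ 3\<bar> = q * b * \<bar>x^3 - y^3\<bar>" using assms
    by (simp add: abs_mult right_diff_distrib[symmetric])
  also have "\<dots> \<le> b * \<bar>x^3 - y^3\<bar>" using assms by (simp add: mult_left_le_one_le mult_right_mono)
  also have "\<dots> \<le> b * (3 * d)" using c assms by (simp add: mult_left_mono)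
  finally show ?thesis unfolding x_def y_def by simp
qed

lemma pow_exp:
  assumes "0 \<le> a" "a \<le> 1"
  shows "(1 - a) ^ n \<le> exp (- a * real n)"
proof -
  have "(1 - a) ^ n \<le> exp (- a) ^ n"
    using assms exp_ge_add_one_self[of "-a"] by (intro power_mono) auto
  also have "\<dots> = exp (- a * real n)" using exp_of_nat_mult[of n "-a"] by (simp add: mult_ac)
  finally show ?thesis .
qed

theorem mainTheorem11:
  fixes alpha :: "nat \<Rightarrow> real" and a :: real
  assumes "\<And>N. 0 \<le> alpha N \<and> alpha N \<le> 1"
    and "alpha \<longlonglongrightarrow> a"
  shows "\<exists>C'>0. \<forall>q\<in>{0..1}. \<forall>N.
     \<bar>measure_pmf.expectation (gw_path q (LN N))
        (\<lambda>zs. real (zs ! 0) * (1 - alpha N) ^ sum_list (take (LN N) zs))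
      - galpha (alpha N) q\<bar> \<le> C' * exp (- alpha N * real (LN N))
   \<and> (LN N \<ge> 1 \<longrightarrow>
     \<bar>measure_pmf.expectation (gw_path q (LN N))
        (\<lambda>zs. real (zs ! 0) * (1 - alpha N) ^ sum_list (take (LN N) zs)
               * (if zs ! (LN N - 1) = 0 then 1 else 0))
      - galpha (alpha N) q\<bar> \<le> C' * exp (- alpha N * real (LN N)))"
proof (intro exI[of _ 9] conjI ballI allI impI)
  fix q :: real and N :: nat
  assume qI: "q \<in> {0..1}"
  have q: "0 \<le> q" "q \<le> 1" using qI by auto
  define al where "al = alpha N"
  have al: "0 \<le> al" "al \<le> 1" using assms(1) al_def by auto
  define b where "b = 1 - al"
  have b: "0 \<le> b" "b \<le> 1" using al b_def by auto
  define L where "L = LN N"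
  define s where "s = sfix b q"
  have s: "0 \<le> s" "s \<le> 1" using sfix_props(1,2)[OF q b] s_def by auto
  define h where "h = b * s^2"
  have h: "0 \<le> h" "h \<le> 1" unfolding h_def using s b by (auto simp: mult_le_one power_le_one)
  have sfx: "1 - q + q * h = s" using sfix_props(3)[OF q b] unfolding s_def h_def by (simp add: algebra_simps)
  have hfix: "b * (1 - q + q * h)^2 = h" using sfx h_def by simp
  have g: "galpha al q = q * b * (1 - q + q * h) ^ 3"
    using galpha_eq[OF q al] sfx s_def b_def by simp
  have g01: "0 \<le> galpha al q" "galpha al q \<le> 1" unfolding g sfx using q b s
    by (auto simp: mult_le_one power_le_one)
  have e3: "exp al \<le> 3" using al exp_le by (smt (verit) exp_mono)
  have ep: "0 < exp (- al * real L)" by simp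
  have up: "uu b q n 0 \<le> h" "h \<le> uu b q n 1" for n
    using uu_mono[OF q b, of 0 h n] uu_mono[OF q b, of h 1 n] h uu_fix[OF hfix, of n] by auto
  have ud: "uu b q n 1 - uu b q n 0 \<le> b ^ n" for n
  proof -
    have "uu b q n 1 - uu b q n 0 \<le> b^n * (uu 1 q n 1 - uu 1 q n 0)"
      using uu_diff[OF q b, of 0 1 n] by simp
    also have "\<dots> \<le> b^n * 1"
      using uu_range[of q 1 1 n] uu_range[of q 1 0 n] q b
      by (intro mult_left_mono) auto
    finally show ?thesis by simp
  qed
  show "\<bar>measure_pmf.expectation (gw_path q (LN N))
        (\<lambda>zs. real (zs ! 0) * (1 - alpha N) ^ sum_list (take (LN N) zs))
      - galpha (alpha N) q\<bar> \<le> 9 * exp (- alpha N * real (LN N))"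
  proof (cases L)
    case 0
    have "\<bar>q - galpha al q\<bar> \<le> 1" using q g01 by linarith
    then show ?thesis using 0 Q1_eq0[OF q, of b] by (simp add: al_def[symmetric] b_def[symmetric] L_def[symmetric])
  next
    case (Suc l)
    have A: "0 \<le> uu b q l 1" "uu b q l 1 \<le> 1" using uu_range[OF q b, of 1 l] by auto
    have "\<bar>uu b q l 1 - h\<bar> \<le> b ^ l" using up[of l] ud[of l] by linarith
    from cube_bound[OF q b A h this]
    have "\<bar>q * b * (1 - q + q * uu b q l 1) ^ 3 - galpha al q\<bar> \<le> 3 * b ^ L"
      unfolding g Suc by simp
    also have "\<dots> \<le> 3 * exp (- al * real L)" using pow_exp[OF al, of L] b_def by simp
    also have "\<dots> \<le> 9 * exp (- al * real L)" using ep by simp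
    finally show ?thesis using Q1_eq[OF q b, of l] Suc by (simp add: al_def[symmetric] b_def[symmetric] L_def[symmetric])
  qed
  assume L1: "1 \<le> LN N"
  show "\<bar>measure_pmf.expectation (gw_path q (LN N))
        (\<lambda>zs. real (zs ! 0) * (1 - alpha N) ^ sum_list (take (LN N) zs)
               * (if zs ! (LN N - 1) = 0 then 1 else 0))
      - galpha (alpha N) q\<bar> \<le> 9 * exp (- alpha N * real (LN N))"
  proof (cases L)
    case 0 then show ?thesis using L1 L_def by simp
  next
    case (Suc l)
    show ?thesis
    proof (cases l)
      case 0
      have E1: "exp (- 1) \<le> exp (- al)" using al by simp
      have E2: "1 \<le> 3 * exp (- 1 :: real)" using exp_le by (simp add: exp_minus field_simps)
      have E3: "1 \<le> 3 * exp (- al)" using E1 E2 by linarith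
      have "0 < exp (- al)" by simp
      then have "1 \<le> 9 * exp (- al)" using E3 by linarith
      then have "1 \<le> 9 * exp (- al * real L)" using Suc 0 by simp
      then show ?thesis using Q2_eq1[OF q b] Suc 0 g01 by (simp add: al_def[symmetric] b_def[symmetric] L_def[symmetric])
    next
      case (Suc j)
      have B: "0 \<le> uu b q j 0" "uu b q j 0 \<le> 1" using uu_range[OF q b, of 0 j] by auto
      have "\<bar>uu b q j 0 - h\<bar> \<le> b ^ j" using up[of j] ud[of j] by linarith
      from cube_bound[OF q b B h this]
      have "\<bar>q * b * (1 - q + q * uu b q j 0) ^ 3 - galpha al q\<bar> \<le> 3 * b ^ Suc j"
        unfolding g by simp
      also have "\<dots> \<le> 3 * exp (- al * real (Suc j))" using pow_exp[OF al, of "Suc j"] b_def by simp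
      also have "\<dots> = 3 * exp al * exp (- al * real L)"
        using \<open>L = Suc l\<close> Suc by (simp add: exp_add[symmetric] algebra_simps)
      also have "\<dots> \<le> 9 * exp (- al * real L)" using e3 ep by simp
      finally show ?thesis using Q2_eq[OF q b, of j] \<open>L = Suc l\<close> Suc by (simp add: al_def[symmetric] b_def[symmetric] L_def[symmetric])
    qed
  qed
qed simp

end
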